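(* Let $C$ and $C'$ be configurations on the same board of $l$ rows and $w$ columns containing $n$ tiles. If $C$ can be reconfigured into $C'$ by a sequence of steps each in direction south or east, then there exists a step sequence $S$ of length $O(n(l+w))$, using only south and east steps, such that applying $S$ to $C$ yields $C'$.
   Context: A board is a rectangular region of the square lattice, formally a partition $B=(O,W)$ of a rectangular set of grid points into open locations $O$ and blocked locations $W$. A tile is a labeled unit square centered on an open location. A configuration $C=(B,P)$ consists of a board $B$ and a set $P$ of tiles, no two at the same location and none at a blocked location. A step in direction $d\in\{N,E,S,W\}$ transforms a configuration as follows: consider translating every tile by one unit in direction $d$; every tile whose translation would land on a blocked location is temporarily added to the blocked set, and this is repeated until no remaining tile's translation lands on a blocked location; then all remaining tiles are translated by one unit in direction $d$. A step sequence is a sequence of directions, applied as successive steps. $C$ can be reconfigured into $C'$ if some step sequence applied to $C$ yields $C'$. *)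

theory Defs
  imports Main
begin

type_synonym loc = "int \<times> int"  (* (row, column); row grows southwards, column eastwards *)

datatype dir = DirN | DirE | DirS | DirW

fun delta :: "dir \<Rightarrow> loc" where
  "delta DirN = (-1, 0)"
| "delta DirS = (1, 0)"
| "delta DirE = (0, 1)"
| "delta DirW = (0, -1)"

definition shift :: "loc \<Rightarrow> dir \<Rightarrow> loc" where
  "shift p d = (fst p + fst (delta d), snd p + snd (delta d))"

definition unshift :: "loc \<Rightarrow> dir \<Rightarrow> loc" where
  "unshift p d = (fst p - fst (delta d), snd p - snd (delta d))"

definition rect :: "nat \<Rightarrow> nat \<Rightarrow> loc set" where
  "rect l w = {p. 0 \<le> fst p \<and> fst p < int l \<and> 0 \<le> snd p \<and> snd p < int w}"

text \<open>A board is given by its set Opn of open locations; every other grid point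
  (the blocked part of the rectangle, and everything outside it) is blocked.
  Tiles are a partial map P from locations to labels.
  stuck Opn P d p: the tile at p is (eventually) added to the blocked set in a step
  in direction d, i.e. the least fixpoint of the iterative blocking process.\<close>
inductive stuck :: "loc set \<Rightarrow> (loc \<Rightarrow> 'a option) \<Rightarrow> dir \<Rightarrow> loc \<Rightarrow> bool"
  for Opn P d where
  blocked: "P p \<noteq> None \<Longrightarrow> shift p d \<notin> Opn \<Longrightarrow> stuck Opn P d p"
| chain: "P p \<noteq> None \<Longrightarrow> stuck Opn P d (shift p d) \<Longrightarrow> stuck Opn P d p"

definition step :: "loc set \<Rightarrow> dir \<Rightarrow> (loc \<Rightarrow> 'a option) \<Rightarrow> (loc \<Rightarrow> 'a option)" where
  "step Opn d P = (\<lambda>q.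
     if P q \<noteq> None \<and> stuck Opn P d q then P q
     else if P (unshift q d) \<noteq> None \<and> \<not> stuck Opn P d (unshift q d) then P (unshift q d)
     else None)"

fun steps :: "loc set \<Rightarrow> dir list \<Rightarrow> (loc \<Rightarrow> 'a option) \<Rightarrow> (loc \<Rightarrow> 'a option)" where
  "steps Opn [] P = P"
| "steps Opn (d # ds) P = steps Opn ds (step Opn d P)"

end

theory Submission
  imports Defs
begin

lemma shift_unshift[simp]: "shift (unshift q d) d = q" "unshift (shift q d) d = q"
  by (cases q; simp add: shift_def unshift_def)+

definition phi :: "(loc \<Rightarrow> 'a option) \<Rightarrow> int" where
  "phi P = (\<Sum>q\<in>dom P. fst q + snd q)"

lemma step_dom:
  "dom (step Opn d P) = {q\<in>dom P. stuck Opn P d q} \<union> (\<lambda>q. shift q d) ` {q\<in>dom P. \<not> stuck Opn P d q}"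
proof (rule set_eqI)
  fix q
  show "q \<in> dom (step Opn d P) \<longleftrightarrow> q \<in> {q\<in>dom P. stuck Opn P d q} \<union> (\<lambda>q. shift q d) ` {q\<in>dom P. \<not> stuck Opn P d q}"
  proof
    assume "q \<in> dom (step Opn d P)"
    then show "q \<in> {q\<in>dom P. stuck Opn P d q} \<union> (\<lambda>q. shift q d) ` {q\<in>dom P. \<not> stuck Opn P d q}"
      unfolding step_def dom_def
      by (auto split: if_splits intro!: image_eqI[where x="unshift q d"])
  next
    assume "q \<in> {q\<in>dom P. stuck Opn P d q} \<union> (\<lambda>q. shift q d) ` {q\<in>dom P. \<not> stuck Opn P d q}"
    then show "q \<in> dom (step Opn d P)"
      unfolding step_def dom_def by auto
  qed
qed

lemma step_disj:
  "{q\<in>dom P. stuck Opn P d q} \<inter> (\<lambda>q. shift q d) ` {q\<in>dom P. \<not> stuck Opn P d q} = {}"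
proof (rule ccontr)
  assume "\<not> ?thesis"
  then obtain m where m: "P m \<noteq> None" "\<not> stuck Opn P d m" "stuck Opn P d (shift m d)"
    by blast
  then show False using stuck.chain[of P m Opn d] by blast
qed

lemma step_same:
  assumes "{q\<in>dom P. \<not> stuck Opn P d q} = {}"
  shows "step Opn d P = P"
proof
  fix q
  show "step Opn d P q = P q"
  proof (cases "P q")
    case None
    have "\<not> (P (unshift q d) \<noteq> None \<and> \<not> stuck Opn P d (unshift q d))"
      using assms by blast
    then show ?thesis using None unfolding step_def by auto
  next
    case (Some a)
    then have "stuck Opn P d q" using assms by blast
    then show ?thesis using Some unfolding step_def by simp
  qed
qed

lemma f_shift: "d \<in> {DirS, DirE} \<Longrightarrow> fst (shift q d) + snd (shift q d) = fst q + snd q + 1"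
  by (auto simp: shift_def)

lemma step_props:
  assumes fin: "finite (dom P)" and d: "d \<in> {DirS, DirE}"
  shows "finite (dom (step Opn d P))"
    "card (dom (step Opn d P)) = card (dom P)"
    "phi (step Opn d P) = phi P + int (card {q\<in>dom P. \<not> stuck Opn P d q})"
proof -
  let ?St = "{q\<in>dom P. stuck Opn P d q}"
  let ?Mv = "{q\<in>dom P. \<not> stuck Opn P d q}"
  have f1: "finite ?St" "finite ?Mv" using fin by auto
  have inj: "inj_on (\<lambda>q. shift q d) ?Mv"
    by (metis (no_types, lifting) inj_onI shift_unshift(2))
  have split: "dom P = ?St \<union> ?Mv" "?St \<inter> ?Mv = {}" by auto
  show "finite (dom (step Opn d P))" using f1 by (simp add: step_dom)
  have "card (dom (step Opn d P)) = card ?St + card ((\<lambda>q. shift q d) ` ?Mv)"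
    unfolding step_dom by (rule card_Un_disjoint[OF f1(1) finite_imageI[OF f1(2)] step_disj])
  also have "\<dots> = card ?St + card ?Mv" using card_image[OF inj] by simp
  also have "\<dots> = card (dom P)" using card_Un_disjoint[OF f1 split(2)] split(1) by simp
  finally show "card (dom (step Opn d P)) = card (dom P)" .
  have "phi (step Opn d P) = (\<Sum>q\<in>?St. fst q + snd q) + (\<Sum>q\<in>(\<lambda>q. shift q d) ` ?Mv. fst q + snd q)"
    unfolding phi_def step_dom by (rule sum.union_disjoint[OF f1(1) finite_imageI[OF f1(2)] step_disj])
  also have "(\<Sum>q\<in>(\<lambda>q. shift q d) ` ?Mv. fst q + snd q) = (\<Sum>q\<in>?Mv. fst q + snd q + 1)"
    unfolding sum.reindex[OF inj] comp_def f_shift[OF d] ..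
  also have "\<dots> = (\<Sum>q\<in>?Mv. fst q + snd q) + int (card ?Mv)"
    by (simp add: sum.distrib)
  also have "(\<Sum>q\<in>?St. fst q + snd q) + ((\<Sum>q\<in>?Mv. fst q + snd q) + int (card ?Mv))
      = phi P + int (card ?Mv)"
    unfolding phi_def using sum.union_disjoint[OF f1 split(2), of "\<lambda>q. fst q + snd q"] split(1) by simp
  finally show "phi (step Opn d P) = phi P + int (card ?Mv)" .
qed

lemma reduce:
  "\<And>P. finite (dom P) \<Longrightarrow> set S \<subseteq> {DirS, DirE} \<Longrightarrow>
    (\<exists>S'. set S' \<subseteq> set S \<and> steps Opn S' P = steps Opn S P \<and>
       int (length S') \<le> phi (steps Opn S P) - phi P) \<and>
    card (dom (steps Opn S P)) = card (dom P)"
proof (induction S)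
  case Nil
  then show ?case by (intro conjI exI[of _ "[]"]) auto
next
  case (Cons d ds)
  let ?Q = "step Opn d P"
  have d: "d \<in> {DirS, DirE}" using Cons.prems by auto
  note sp = step_props[OF Cons.prems(1) d, of Opn]
  from Cons.IH[OF sp(1)] Cons.prems obtain S'' where
    S'': "set S'' \<subseteq> set ds" "steps Opn S'' ?Q = steps Opn ds ?Q"
      "int (length S'') \<le> phi (steps Opn ds ?Q) - phi ?Q"
    and c: "card (dom (steps Opn ds ?Q)) = card (dom ?Q)" by auto
  show ?case
  proof (cases "{q\<in>dom P. \<not> stuck Opn P d q} = {}")
    case True
    then have "?Q = P" by (rule step_same)
    then show ?thesis using S'' c sp by (intro conjI exI[of _ S'']) auto
  next
    case False
    then have "card {q\<in>dom P. \<not> stuck Opn P d q} \<ge> 1"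
      using Cons.prems(1) by (simp add: Suc_leI card_gt_0_iff)
    then show ?thesis using S'' c sp by (intro conjI exI[of _ "d # S''"]) auto
  qed
qed

lemma rect_finite: "finite (rect l w)"
proof -
  have "rect l w \<subseteq> {0..<int l} \<times> {0..<int w}" by (auto simp: rect_def)
  then show ?thesis by (rule finite_subset) auto
qed

theorem lemma1:
  "\<exists>c::nat. \<forall>(l::nat) (w::nat) (Opn::loc set) (P::loc \<Rightarrow> 'a option) P' (n::nat).
     Opn \<subseteq> rect l w \<longrightarrow> dom P \<subseteq> Opn \<longrightarrow> dom P' \<subseteq> Opn \<longrightarrow> card (dom P) = n \<longrightarrow>
     (\<exists>S. set S \<subseteq> {DirS, DirE} \<and> steps Opn S P = P') \<longrightarrow>
     (\<exists>S. set S \<subseteq> {DirS, DirE} \<and> length S \<le> c * n * (l + w) \<and> steps Opn S P = P')"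
proof (intro exI[of _ 1] allI impI)
  fix l w :: nat and Opn :: "loc set" and P :: "loc \<Rightarrow> 'a option" and P' n
  assume o: "Opn \<subseteq> rect l w" and dP: "dom P \<subseteq> Opn" and dP': "dom P' \<subseteq> Opn"
    and n: "card (dom P) = n" and ex: "\<exists>S. set S \<subseteq> {DirS, DirE} \<and> steps Opn S P = P'"
  from ex obtain S where S: "set S \<subseteq> {DirS, DirE}" "steps Opn S P = P'" by auto
  have finP: "finite (dom P)" by (rule finite_subset[OF _ rect_finite[of l w]]) (use o dP in blast)
  have r: "(\<exists>S'. set S' \<subseteq> set S \<and> steps Opn S' P = P' \<and>
       int (length S') \<le> phi P' - phi P) \<and> card (dom P') = card (dom P)"
    using reduce[OF finP S(1), of Opn] unfolding S(2) .
  then obtain S' where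
    S': "set S' \<subseteq> set S" "steps Opn S' P = P'" "int (length S') \<le> phi P' - phi P"
    by blast
  have c: "card (dom P') = n" using r n by simp
  have "phi P \<ge> 0" unfolding phi_def
  proof (rule sum_nonneg)
    fix q assume "q \<in> dom P"
    then have "q \<in> rect l w" using o dP by blast
    then show "0 \<le> fst q + snd q" by (simp add: rect_def)
  qed
  moreover have "phi P' \<le> (\<Sum>q\<in>dom P'. int (l + w))" unfolding phi_def
  proof (rule sum_mono)
    fix q assume "q \<in> dom P'"
    then have "q \<in> rect l w" using o dP' by blast
    then show "fst q + snd q \<le> int (l + w)" by (simp add: rect_def)
  qed
  moreover have "(\<Sum>q\<in>dom P'. int (l + w)) = int (n * (l + w))" using c by simp
  ultimately have "int (length S') \<le> int (n * (l + w))" using S'(3) by linarith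
  then show "\<exists>S. set S \<subseteq> {DirS, DirE} \<and> length S \<le> 1 * n * (l + w) \<and> steps Opn S P = P'"
  proof (intro exI[of _ S'] conjI)
    show "set S' \<subseteq> {DirS, DirE}" using S'(1) S(1) by (rule order_trans)
    show "length S' \<le> 1 * n * (l + w)" using \<open>int (length S') \<le> int (n * (l + w))\<close> of_nat_le_iff by (metis mult_1)
    show "steps Opn S' P = P'" by (rule S'(2))
  qed
qed

end
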